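(* Let $k\ge 2$ and let $G=(\{a,b\},\varphi,a)$ be a D0L-system with $\varphi$ $k$-uniform. Then $G$ is not circular if and only if one of the following holds: (i) $\varphi(a)=\varphi(b)$; (ii) $\varphi(a)=a^k$ or $\varphi(b)=b^k$; (iii) $\varphi(a)=b^k$ and $\varphi(b)=a^k$; (iv) $k=2m+1$ with $m\ge1$, $\varphi(a)=(ab)^ma$ and $\varphi(b)=(ba)^mb$; (v) $k=2m+1$ with $m\ge1$, $\varphi(a)=(ba)^mb$ and $\varphi(b)=(ab)^ma$.
   Context: A D0L-system $G=(\mathcal{A},\varphi,w)$ has language $L(G)=\{\varphi^n(w):n\in\mathbb{N}\}$; $S(L(G))$ is the set of factors of its words. For $u\in S(L(G))$, an interpretation of $u$ is a triple $(p,v,s)$ with $p,s\in\mathcal{A}^*$, $v\in S(L(G))$, $\varphi(v)=pus$. Writing $v=v_1\cdots v_n$, $v'=v'_1\cdots v'_m$, $u=u_1\cdots u_\ell$, interpretations $(p,v,s)$, $(p',v',s')$ are synchronized at position $j$ if there are $i,i'$ with $\varphi(v_1\cdots v_i)=pu_1\cdots u_j$ and $\varphi(v'_1\cdots v'_{i'})=p'u_1\cdots u_j$; $u$ has a synchronizing point at position $j$ if all its interpretations are pairwise synchronized at $j$. A PD0L-system (no letter maps to $\varepsilon$) that is injective on $S(L(G))$ (i.e. $\varphi(u)=\varphi(v)$ with $u,v\in S(L(G))$ implies $u=v$) is circular if there exists $Z$ such that every $u\in S(L(G))$ with $|u|>Z$ has a synchronizing point. A morphism on $\{a,b\}$ is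 $k$-uniform if $|\varphi(a)|=|\varphi(b)|=k$. *)

theory Defs
  imports Main
begin

datatype ab = A | B

definition morph :: "('s \<Rightarrow> 's list) \<Rightarrow> 's list \<Rightarrow> 's list" where
  "morph \<phi> u = concat (map \<phi> u)"

definition D0L_lang :: "('s \<Rightarrow> 's list) \<Rightarrow> 's list \<Rightarrow> 's list set" where
  "D0L_lang \<phi> w = {(morph \<phi> ^^ n) w | n. True}"

definition factors :: "('s \<Rightarrow> 's list) \<Rightarrow> 's list \<Rightarrow> 's list set" where
  "factors \<phi> w = {u. \<exists>x y z. z \<in> D0L_lang \<phi> w \<and> z = x @ u @ y}"

definition is_interp :: "('s \<Rightarrow> 's list) \<Rightarrow> 's list \<Rightarrow> 's list \<Rightarrow> 's list \<times> 's list \<times> 's list \<Rightarrow> bool" where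
  "is_interp \<phi> w u t = (case t of (p, v, s) \<Rightarrow> v \<in> factors \<phi> w \<and> morph \<phi> v = p @ u @ s)"

definition synchronized_at :: "('s \<Rightarrow> 's list) \<Rightarrow> 's list \<Rightarrow> nat \<Rightarrow> 's list \<times> 's list \<times> 's list \<Rightarrow> 's list \<times> 's list \<times> 's list \<Rightarrow> bool" where
  "synchronized_at \<phi> u j t t' = (case t of (p, v, s) \<Rightarrow> case t' of (p', v', s') \<Rightarrow>
     (\<exists>i i'. morph \<phi> (take i v) = p @ take j u \<and> morph \<phi> (take i' v') = p' @ take j u))"

definition has_sync_point :: "('s \<Rightarrow> 's list) \<Rightarrow> 's list \<Rightarrow> 's list \<Rightarrow> bool" where
  "has_sync_point \<phi> w u = (\<exists>j \<le> length u. \<forall>t t'. is_interp \<phi> w u t \<longrightarrow> is_interp \<phi> w u t'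
       \<longrightarrow> synchronized_at \<phi> u j t t')"

definition circular :: "('s \<Rightarrow> 's list) \<Rightarrow> 's list \<Rightarrow> bool" where
  "circular \<phi> w = ((\<forall>x. \<phi> x \<noteq> []) \<and>
     (\<forall>u \<in> factors \<phi> w. \<forall>v \<in> factors \<phi> w. morph \<phi> u = morph \<phi> v \<longrightarrow> u = v) \<and>
     (\<exists>Z::nat. \<forall>u \<in> factors \<phi> w. length u > Z \<longrightarrow> has_sync_point \<phi> w u))"

definition uniform :: "nat \<Rightarrow> (ab \<Rightarrow> ab list) \<Rightarrow> bool" where
  "uniform k \<phi> = (length (\<phi> A) = k \<and> length (\<phi> B) = k)"

end

theory Submission
  imports Defs
begin


lemma morph_Nil[simp]: "morph \<phi> [] = []" by (simp add: morph_def)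
lemma morph_Cons[simp]: "morph \<phi> (c#u) = \<phi> c @ morph \<phi> u" by (simp add: morph_def)
lemma morph_append[simp]: "morph \<phi> (u@v) = morph \<phi> u @ morph \<phi> v" by (simp add: morph_def)

lemma unif_len: "uniform k \<phi> \<Longrightarrow> length (\<phi> c) = k"
  by (cases c) (auto simp: uniform_def)

lemma length_morph: "uniform k \<phi> \<Longrightarrow> length (morph \<phi> u) = k * length u"
  by (induction u) (auto simp: unif_len)

lemma take_morph: "uniform k \<phi> \<Longrightarrow> morph \<phi> (take i v) = take (k*i) (morph \<phi> v)"
proof (induction v arbitrary: i)
  case Nil then show ?case by simp
next
  case (Cons c v) then show ?case by (cases i) (auto simp: unif_len)
qed

lemma drop_morph: "uniform k \<phi> \<Longrightarrow> morph \<phi> (drop i v) = drop (k*i) (morph \<phi> v)"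
proof (induction v arbitrary: i)
  case Nil then show ?case by simp
next
  case (Cons c v) then show ?case by (cases i) (auto simp: unif_len)
qed

lemma block_morph: "uniform k \<phi> \<Longrightarrow> i < length v \<Longrightarrow> take k (drop (k*i) (morph \<phi> v)) = \<phi> (v!i)"
proof -
  assume u: "uniform k \<phi>" and i: "i < length v"
  have "drop (k*i) (morph \<phi> v) = morph \<phi> (drop i v)" using drop_morph[OF u] by simp
  also have "drop i v = v!i # drop (Suc i) v" using i by (simp add: Cons_nth_drop_Suc)
  finally show ?thesis using unif_len[OF u] by simp
qed



lemma factorsI: "z \<in> D0L_lang \<phi> w \<Longrightarrow> z = x@u@y \<Longrightarrow> u \<in> factors \<phi> w"
  unfolding factors_def by blast

lemma lang_iter: "(morph \<phi> ^^ n) w \<in> D0L_lang \<phi> w"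
  unfolding D0L_lang_def by blast

lemma factor_sub: "x@u@y \<in> factors \<phi> w \<Longrightarrow> u \<in> factors \<phi> w"
proof -
  assume "x@u@y \<in> factors \<phi> w"
  then obtain a b z where z: "z \<in> D0L_lang \<phi> w" "z = a@(x@u@y)@b" unfolding factors_def by blast
  then have "z = (a@x)@u@(y@b)" by simp
  then show ?thesis using factorsI[OF z(1)] by blast
qed

lemma factor_take: "u \<in> factors \<phi> w \<Longrightarrow> take n u \<in> factors \<phi> w"
  using factor_sub[of "[]" "take n u" "drop n u"] by simp

lemma factor_drop: "u \<in> factors \<phi> w \<Longrightarrow> drop n u \<in> factors \<phi> w"
  using factor_sub[of "take n u" "drop n u" "[]"] by simp

lemma factor_slice: "u \<in> factors \<phi> w \<Longrightarrow> take n (drop m u) \<in> factors \<phi> w"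
  by (intro factor_take factor_drop)

lemma factor_iter: "(morph \<phi> ^^ n) w \<in> factors \<phi> w"
proof -
  have "(morph \<phi> ^^ n) w = [] @ (morph \<phi> ^^ n) w @ []" by simp
  then show ?thesis using factorsI[OF lang_iter] by blast
qed

lemma factor_w: "w \<in> factors \<phi> w"
  using factor_iter[where n=0 and w=w] by simp

lemma factor_morph: "u \<in> factors \<phi> w \<Longrightarrow> morph \<phi> u \<in> factors \<phi> w"
proof -
  assume "u \<in> factors \<phi> w"
  then obtain x y z n where "z = (morph \<phi> ^^ n) w" "z = x@u@y"
    unfolding factors_def D0L_lang_def by blast
  then have "(morph \<phi> ^^ Suc n) w = morph \<phi> x @ morph \<phi> u @ morph \<phi> y"
    by (metis funpow_Suc_right comp_apply funpow_swap1 morph_append)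
  then show ?thesis using factorsI[OF lang_iter] by blast
qed

lemma factor_desub: "u \<in> factors \<phi> [A] \<Longrightarrow> 2 \<le> length u \<Longrightarrow>
   \<exists>v p s. v \<in> factors \<phi> [A] \<and> morph \<phi> v = p@u@s"
proof -
  assume "u \<in> factors \<phi> [A]" "2 \<le> length u"
  then obtain x y z n where e0: "z = (morph \<phi> ^^ n) [A]" "z = x@u@y"
    unfolding factors_def D0L_lang_def by blast
  then have e: "(morph \<phi> ^^ n) [A] = x@u@y" by simp
  show ?thesis
  proof (cases n)
    case 0
    then have "[A] = x@u@y" using e by simp
    then have "length [A] = length (x@u@y)" by (simp only:)
    then have "length (x@u@y) = 1" by simp
    then show ?thesis using \<open>2 \<le> length u\<close> by simp
  next
    case (Suc m)
    then have "morph \<phi> ((morph \<phi> ^^ m) [A]) = x@u@y" using e by simp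
    then show ?thesis using factor_iter by blast
  qed
qed

lemma trim: "uniform k \<phi> \<Longrightarrow> 0 < k \<Longrightarrow> v \<in> factors \<phi> w \<Longrightarrow> morph \<phi> v = p@u@s \<Longrightarrow>
  \<exists>p' v'. v' \<in> factors \<phi> w \<and> morph \<phi> v' = p'@u@s \<and> length p' < k \<and> length p' mod k = length p mod k"
proof (induction v arbitrary: p)
  case Nil then show ?case by auto
next
  case (Cons c v)
  show ?case
  proof (cases "length p < k")
    case True then show ?thesis using Cons.prems by blast
  next
    case False
    have lc: "length (\<phi> c) = k" using unif_len[OF Cons.prems(1)] .
    from Cons.prems(4) have "\<phi> c @ morph \<phi> v = p @ (u @ s)" by simp
    define p0 where "p0 = drop k p"
    have "take k (\<phi> c @ morph \<phi> v) = take k (p @ (u @ s))" using \<open>\<phi> c @ morph \<phi> v = p @ (u @ s)\<close> by simp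
    then have tk: "\<phi> c = take k p" using False lc by simp
    have p: "p = \<phi> c @ p0" unfolding p0_def tk by simp
    have mv: "morph \<phi> v = p0 @ u @ s" using \<open>\<phi> c @ morph \<phi> v = p @ (u @ s)\<close> p by simp
    have "v \<in> factors \<phi> w" using factor_drop[OF Cons.prems(3), of 1] by simp
    from Cons.IH[OF Cons.prems(1,2) this mv] obtain p' v' where
      "v' \<in> factors \<phi> w \<and> morph \<phi> v' = p'@u@s \<and> length p' < k \<and> length p' mod k = length p0 mod k" by blast
    moreover have "length p mod k = length p0 mod k" using p lc by simp
    ultimately show ?thesis by auto
  qed
qed

lemma block_in: "uniform k \<phi> \<Longrightarrow> 0 < k \<Longrightarrow> morph \<phi> v = p@u@s \<Longrightarrow> length p \<le> k*i \<Longrightarrow>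
   k*(Suc i) \<le> length p + length u \<Longrightarrow>
   i < length v \<and> \<phi> (v!i) = take k (drop (k*i - length p) u)"
proof -
  assume un: "uniform k \<phi>" and k: "0 < k" and e: "morph \<phi> v = p@u@s" and l1: "length p \<le> k*i"
    and l2: "k*(Suc i) \<le> length p + length u"
  have "k * length v = length p + length u + length s" using e length_morph[OF un, of v] by simp
  then have "k*(Suc i) \<le> k * length v" using l2 by linarith
  then have "Suc i \<le> length v" using k by (metis mult_le_cancel1 not_gr0)
  then have iv: "i < length v" by simp
  have "\<phi> (v!i) = take k (drop (k*i) (p@u@s))" using block_morph[OF un iv] e by simp
  also have "drop (k*i) (p@u@s) = drop (k*i - length p) u @ drop (k*i - length p - length u) s"
    using l1 by simp
  also have "take k \<dots> = take k (drop (k*i - length p) u)"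
    using l1 l2 by (simp add: take_append)
  finally show ?thesis using iv by simp
qed


lemma letter_inj: "\<phi> A \<noteq> \<phi> B \<Longrightarrow> \<phi> a = \<phi> b \<Longrightarrow> a = b"
  by (cases a; cases b) auto

lemma extract_blocks: "uniform k \<phi> \<Longrightarrow> 2 \<le> k \<Longrightarrow> u \<in> factors \<phi> [A] \<Longrightarrow> k*(M+2) \<le> length u \<Longrightarrow>
  \<exists>w P. w \<in> factors \<phi> [A] \<and> length w = M \<and> P < k \<and>
     (\<forall>i<M. \<phi> (w!i) = take k (drop (k*Suc i - P) u))"
proof -
  assume un: "uniform k \<phi>" and k: "2 \<le> k" and uF: "u \<in> factors \<phi> [A]" and l: "k*(M+2) \<le> length u"
  have "2 \<le> length u" using k l by (metis add_2_eq_Suc' le_add2 le_trans mult_le_mono nat_mult_1 one_le_numeral Suc_le_eq)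
  then obtain v p s where "v \<in> factors \<phi> [A]" "morph \<phi> v = p@u@s" using factor_desub[OF uF] by blast
  then obtain p' v' where v': "v' \<in> factors \<phi> [A]" "morph \<phi> v' = p'@u@s" "length p' < k"
    using trim[OF un] k by (metis not_numeral_le_zero not_gr0)
  have "k * length v' = length p' + length u + length s" using v'(2) length_morph[OF un, of v'] by simp
  then have "k*(M+2) \<le> k * length v'" using l by linarith
  then have lv: "M + 2 \<le> length v'" using k mult_le_cancel1[of k "M+2" "length v'"] by simp
  define w where "w = take M (drop 1 v')"
  have "w \<in> factors \<phi> [A]" unfolding w_def using v'(1) by (rule factor_slice)
  moreover have "length w = M" unfolding w_def using lv by simp
  moreover have "\<forall>i<M. \<phi> (w!i) = take k (drop (k*Suc i - length p') u)"
  proof (intro allI impI)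
    fix i assume i: "i < M"
    have "length p' \<le> k * Suc i" using v'(3) by (metis le_add1 less_imp_le_nat mult_Suc_right order_trans)
    moreover have "k * Suc (Suc i) \<le> length p' + length u"
    proof -
      have "k * Suc (Suc i) \<le> k*(M+2)" using i by simp
      then show ?thesis using l by linarith
    qed
    ultimately have "\<phi> (v'!Suc i) = take k (drop (k*Suc i - length p') u)"
      using block_in[OF un _ v'(2)] k by simp
    moreover have "w!i = v'!Suc i" unfolding w_def using i lv by simp
    ultimately show "\<phi> (w!i) = take k (drop (k*Suc i - length p') u)" by simp
  qed
  ultimately show ?thesis using v'(3) by blast
qed

lemma runs1: "uniform k \<phi> \<Longrightarrow> 2 \<le> k \<Longrightarrow> (\<forall>e. \<phi> e \<noteq> replicate k c) \<Longrightarrow> u \<in> factors \<phi> [A] \<Longrightarrow>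
   3*k \<le> length u \<Longrightarrow> \<forall>i<length u. u!i = c \<Longrightarrow> False"
proof -
  assume un: "uniform k \<phi>" and k: "2 \<le> k" and ne: "\<forall>e. \<phi> e \<noteq> replicate k c"
    and uF: "u \<in> factors \<phi> [A]" and l: "3*k \<le> length u" and c: "\<forall>i<length u. u!i = c"
  obtain w P where w: "length w = 1" "P < k" "\<phi> (w!0) = take k (drop (k - P) u)"
    using extract_blocks[OF un k uF, of 1] l by auto
  have "take k (drop (k - P) u) = replicate k c"
  proof (rule nth_equalityI)
    show "length (take k (drop (k - P) u)) = length (replicate k c)" using l by simp
    fix j assume "j < length (take k (drop (k - P) u))"
    then have "j < k" "k - P + j < length u" by auto
    then show "take k (drop (k - P) u) ! j = replicate k c ! j" using c by simp
  qed
  then show False using ne w(3) by simp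
qed

lemma runs2: "uniform k \<phi> \<Longrightarrow> 2 \<le> k \<Longrightarrow> \<phi> A \<noteq> \<phi> B \<Longrightarrow> \<phi> e = replicate k c \<Longrightarrow>
   (\<forall>w\<in>factors \<phi> [A]. R0 \<le> length w \<longrightarrow> \<not>(\<forall>i<length w. w!i = e)) \<Longrightarrow> u \<in> factors \<phi> [A] \<Longrightarrow>
   k*(R0+2) \<le> length u \<Longrightarrow> \<forall>i<length u. u!i = c \<Longrightarrow> False"
proof -
  assume un: "uniform k \<phi>" and k: "2 \<le> k" and inj: "\<phi> A \<noteq> \<phi> B" and e: "\<phi> e = replicate k c"
    and R: "\<forall>w\<in>factors \<phi> [A]. R0 \<le> length w \<longrightarrow> \<not>(\<forall>i<length w. w!i = e)"
    and uF: "u \<in> factors \<phi> [A]" and l: "k*(R0+2) \<le> length u" and c: "\<forall>i<length u. u!i = c"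
  obtain w P where w: "w \<in> factors \<phi> [A]" "length w = R0" "P < k"
     "\<forall>i<R0. \<phi> (w!i) = take k (drop (k*Suc i - P) u)"
    using extract_blocks[OF un k uF l] by blast
  have "\<forall>i<length w. w!i = e"
  proof (intro allI impI)
    fix i assume i: "i < length w"
    have le: "k * Suc i - P + k \<le> length u"
    proof -
      have "k * Suc i + k \<le> k*(R0+2)" using i w(2) by simp
      then show ?thesis using l by linarith
    qed
    have "take k (drop (k*Suc i - P) u) = replicate k c"
    proof (rule nth_equalityI)
      show "length (take k (drop (k*Suc i - P) u)) = length (replicate k c)" using le by simp
      fix j assume "j < length (take k (drop (k*Suc i - P) u))"
      then have "j < k" "k*Suc i - P + j < length u" using le by auto
      then show "take k (drop (k*Suc i - P) u) ! j = replicate k c ! j" using c by simp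
    qed
    then have "\<phi> (w!i) = \<phi> e" using w(4) i w(2) e by simp
    then show "w!i = e" using letter_inj[OF inj] by blast
  qed
  then show False using R w(1,2) by blast
qed

definition exc :: "nat \<Rightarrow> (ab \<Rightarrow> ab list) \<Rightarrow> bool" where
  "exc k \<phi> = (\<phi> A = \<phi> B
     \<or> (\<phi> A = replicate k A \<or> \<phi> B = replicate k B)
     \<or> (\<phi> A = replicate k B \<and> \<phi> B = replicate k A)
     \<or> (\<exists>m\<ge>1. k = 2*m+1 \<and> \<phi> A = concat (replicate m [A,B]) @ [A]
                          \<and> \<phi> B = concat (replicate m [B,A]) @ [B])
     \<or> (\<exists>m\<ge>1. k = 2*m+1 \<and> \<phi> A = concat (replicate m [B,A]) @ [B]
                          \<and> \<phi> B = concat (replicate m [A,B]) @ [A]))"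

lemma run_bound: "uniform k \<phi> \<Longrightarrow> 2 \<le> k \<Longrightarrow> \<not> exc k \<phi> \<Longrightarrow> u \<in> factors \<phi> [A] \<Longrightarrow>
   k*(3*k+2) \<le> length u \<Longrightarrow> \<forall>i<length u. u!i = c \<Longrightarrow> False"
proof -
  assume un: "uniform k \<phi>" and k: "2 \<le> k" and ne: "\<not> exc k \<phi>" and uF: "u \<in> factors \<phi> [A]"
    and l: "k*(3*k+2) \<le> length u" and c: "\<forall>i<length u. u!i = c"
  have inj: "\<phi> A \<noteq> \<phi> B" using ne unfolding exc_def by blast
  have "k*3 \<le> k*(3*k+2)" by (rule mult_le_mono2) (use k in simp)
  then have "k*3 \<le> length u" using l by (rule le_trans)
  then have l3: "3*k \<le> length u" by (simp add: mult.commute)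
  show False
  proof (cases "\<forall>e. \<phi> e \<noteq> replicate k c")
    case True show False by (rule runs1[OF un k True uF l3 c])
  next
    case False
    then obtain e where e: "\<phi> e = replicate k c" by blast
    have rne: "replicate k A \<noteq> replicate k B" using k by (cases k) auto
    have ne2: "\<forall>e'. \<phi> e' \<noteq> replicate k e"
    proof (intro allI)
      fix e'
      have nA: "\<phi> A \<noteq> replicate k A" "\<phi> B \<noteq> replicate k B"
        "\<not>(\<phi> A = replicate k B \<and> \<phi> B = replicate k A)" using ne unfolding exc_def by blast+
      show "\<phi> e' \<noteq> replicate k e"
        using nA e rne by (cases e; cases c; cases e') auto
    qed
    have R: "\<forall>w\<in>factors \<phi> [A]. 3*k \<le> length w \<longrightarrow> \<not>(\<forall>i<length w. w!i = e)"
      using runs1[OF un k ne2] by blast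
    show False by (rule runs2[OF un k inj e R uF l c])
  qed
qed


fun flip :: "ab \<Rightarrow> ab" where "flip A = B" | "flip B = A"

lemma flip_flip[simp]: "flip (flip c) = c" by (cases c) auto
lemma flip_neq[simp]: "flip c \<noteq> c" "c \<noteq> flip c" by (cases c; auto)+
lemma neq_flip: "a \<noteq> b \<Longrightarrow> b = flip a" by (cases a; cases b) auto

fun altl :: "ab \<Rightarrow> nat \<Rightarrow> ab list" where
  "altl c 0 = []" | "altl c (Suc n) = c # altl (flip c) n"

lemma length_altl[simp]: "length (altl c n) = n" by (induction n arbitrary: c) auto

lemma nth_altl: "j < n \<Longrightarrow> altl c n ! j = (if even j then c else flip c)"
proof (induction n arbitrary: c j)
  case 0 then show ?case by simp
next
  case (Suc n) then show ?case by (cases j) auto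
qed

lemma altl_odd: "altl c (2*m+1) = concat (replicate m [c, flip c]) @ [c]"
proof (induction m)
  case 0 then show ?case by simp
next
  case (Suc m)
  have "altl c (2*Suc m+1) = c # flip c # altl c (2*m+1)" by simp
  then show ?case using Suc by simp
qed

definition altw :: "ab list \<Rightarrow> bool" where
  "altw u = (\<forall>i. Suc i < length u \<longrightarrow> u!i \<noteq> u!Suc i)"

lemma alt_nth: "altw u \<Longrightarrow> b + j < length u \<Longrightarrow> u!(b+j) = (if even j then u!b else flip (u!b))"
proof (induction j)
  case 0 then show ?case by simp
next
  case (Suc j)
  then have IH: "u!(b+j) = (if even j then u!b else flip (u!b))" by simp
  have "u!(b+j) \<noteq> u!Suc (b+j)" using Suc.prems unfolding altw_def by simp
  then have "u!(b + Suc j) = flip (u!(b+j))" using neq_flip by simp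
  then show ?case using IH by simp
qed

lemma alt_bound: "uniform k \<phi> \<Longrightarrow> 2 \<le> k \<Longrightarrow> \<not> exc k \<phi> \<Longrightarrow> u \<in> factors \<phi> [A] \<Longrightarrow> altw u \<Longrightarrow>
   k*(k*(3*k+2)+2) \<le> length u \<Longrightarrow> False"
proof -
  assume un: "uniform k \<phi>" and k: "2 \<le> k" and ne: "\<not> exc k \<phi>" and uF: "u \<in> factors \<phi> [A]"
    and al: "altw u" and l: "k*(k*(3*k+2)+2) \<le> length u"
  define Rr where "Rr = k*(3*k+2)"
  have inj: "\<phi> A \<noteq> \<phi> B" using ne unfolding exc_def by blast
  obtain w P where w: "w \<in> factors \<phi> [A]" "length w = Rr" "P < k"
     "\<forall>i<Rr. \<phi> (w!i) = take k (drop (k*Suc i - P) u)"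
    using extract_blocks[OF un k uF] l unfolding Rr_def by blast
  have "2*1 \<le> k*(3*k+2)" using k by (intro mult_le_mono) auto
  then have Rr2: "2 \<le> Rr" unfolding Rr_def by simp
  define b where "b = k - P"
  have bi: "\<And>i. k*Suc i - P = b + k*i" unfolding b_def using w(3) by simp
  have lenu: "\<And>i j. i < Rr \<Longrightarrow> j < k \<Longrightarrow> b + (k*i + j) < length u"
  proof -
    fix i j assume i: "i < Rr" and j: "j < k"
    have "k * Suc i + k \<le> k*(Rr+2)" using i by simp
    moreover have "k*(Rr+2) \<le> length u" using l unfolding Rr_def .
    moreover have "b \<le> k" unfolding b_def by simp
    moreover have "k * Suc i = k + k*i" by simp
    ultimately show "b + (k*i + j) < length u" using j by linarith
  qed
  have nth_blk: "\<And>i j. i < Rr \<Longrightarrow> j < k \<Longrightarrow> \<phi> (w!i) ! j = u!(b + (k*i + j))"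
  proof -
    fix i j assume i: "i < Rr" and j: "j < k"
    have le: "b + k*i \<le> length u" using lenu[OF i j] by linarith
    have "\<phi> (w!i) = take k (drop (b + k*i) u)" using w(4) i bi[of i] by simp
    then show "\<phi> (w!i) ! j = u!(b + (k*i + j))" using j le by (simp add: add.assoc)
  qed
  show False
  proof (cases "even k")
    case True
    have "\<forall>i<length w. w!i = w!0"
    proof (intro allI impI)
      fix i assume i: "i < length w"
      have "\<phi> (w!i) = \<phi> (w!0)"
      proof (rule nth_equalityI)
        show "length (\<phi> (w!i)) = length (\<phi> (w!0))" using unif_len[OF un] by simp
        fix j assume "j < length (\<phi> (w!i))"
        then have j: "j < k" using unif_len[OF un] by simp
        have ev: "even (k*i)" using True by simp
        have "u!((b + j) + k*i) = u!(b+j)" using alt_nth[OF al, of "b+j" "k*i"] lenu[of i j] i w(2) j ev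
          by (simp add: add.commute add.left_commute)
        then show "\<phi> (w!i) ! j = \<phi> (w!0) ! j" using nth_blk[of i j] nth_blk[of 0 j] i w(2) j Rr2
          by (simp add: add.commute add.left_commute add.assoc)
      qed
      then show "w!i = w!0" using letter_inj[OF inj] by blast
    qed
    then show False using run_bound[OF un k ne w(1), of "w!0"] w(2) unfolding Rr_def by simp
  next
    case False
    define c0 where "c0 = u!b"
    have i0: "\<phi> (w!0) = altl c0 k"
    proof (rule nth_equalityI)
      show "length (\<phi> (w!0)) = length (altl c0 k)" using unif_len[OF un] by simp
      fix j assume "j < length (\<phi> (w!0))"
      then have j: "j < k" using unif_len[OF un] by simp
      show "\<phi> (w!0) ! j = altl c0 k ! j" using nth_blk[of 0 j] Rr2 j alt_nth[OF al, of b j] lenu[of 0 j]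
        unfolding c0_def by (simp add: nth_altl)
    qed
    have i1: "\<phi> (w!1) = altl (flip c0) k"
    proof (rule nth_equalityI)
      show "length (\<phi> (w!1)) = length (altl (flip c0) k)" using unif_len[OF un] by simp
      fix j assume "j < length (\<phi> (w!1))"
      then have j: "j < k" using unif_len[OF un] by simp
      have "u!(b + (k + j)) = (if even (k+j) then c0 else flip c0)"
        using alt_nth[OF al, of b "k+j"] lenu[of 1 j] Rr2 j unfolding c0_def by simp
      then show "\<phi> (w!1) ! j = altl (flip c0) k ! j" using nth_blk[of 1 j] Rr2 j False
        by (simp add: nth_altl)
    qed
    obtain m where m: "k = 2*m+1" using False by (metis oddE)
    have m1: "1 \<le> m" using m k by simp
    have ne01: "w!0 \<noteq> w!1"
    proof
      assume "w!0 = w!1"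
      then have "altl c0 k = altl (flip c0) k" using i0 i1 by simp
      then have "altl c0 k ! 0 = altl (flip c0) k ! 0" by simp
      then show False using k by (simp add: nth_altl)
    qed
    have i0': "\<phi> (w!0) = concat (replicate m [c0, flip c0]) @ [c0]"
      by (simp only: i0 m altl_odd)
    have i1': "\<phi> (w!1) = concat (replicate m [flip c0, c0]) @ [flip c0]"
      using altl_odd[of "flip c0" m] by (simp only: i1 m flip_flip)
    have "exc k \<phi>"
    proof (cases "w!0")
      case A
      then have wB: "w!1 = B" using ne01 by (cases "w!1") auto
      show ?thesis
      proof (cases c0)
        case A then show ?thesis using i0' i1' \<open>w!0 = A\<close> wB m m1 unfolding exc_def by auto
      next
        case B then show ?thesis using i0' i1' \<open>w!0 = A\<close> wB m m1 unfolding exc_def by auto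
      qed
    next
      case B
      then have wA: "w!1 = A" using ne01 by (cases "w!1") auto
      show ?thesis
      proof (cases c0)
        case A then show ?thesis using i0' i1' \<open>w!0 = B\<close> wA m m1 unfolding exc_def by auto
      next
        case B then show ?thesis using i0' i1' \<open>w!0 = B\<close> wA m m1 unfolding exc_def by auto
      qed
    qed
    then show False using ne by simp
  qed
qed


lemma conc_rep: "concat (replicate a (concat (replicate m z))) = concat (replicate (a*m) z)"
  by (induction a) (auto simp: replicate_add)

lemma pow_comm: "u@v = v@u \<Longrightarrow> concat (replicate (length v) u) = concat (replicate (length u) v)"
proof -
  assume "u@v = v@u"
  then obtain m n z where u: "concat (replicate m z) = u" and v: "concat (replicate n z) = v"
    using comm_append_are_replicate by blast
  have lu: "length u = m * length z" using u[symmetric] by (simp add: length_concat sum_list_replicate)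
  have lv: "length v = n * length z" using v[symmetric] by (simp add: length_concat sum_list_replicate)
  have "concat (replicate (length v) u) = concat (replicate (length v * m) z)" using u conc_rep by metis
  also have "\<dots> = concat (replicate (length u * n) z)" using lu lv by (simp add: mult.commute mult.left_commute)
  also have "\<dots> = concat (replicate (length u) v)" using v conc_rep by metis
  finally show ?thesis .
qed

lemma comm_cancel: "z \<noteq> [] \<Longrightarrow> a@z = z@a \<Longrightarrow> b@z = z@b \<Longrightarrow> length a = length b \<Longrightarrow> a = b"
proof -
  assume z: "z \<noteq> []" and ha: "a@z = z@a" and hb: "b@z = z@b" and l: "length a = length b"
  have "concat (replicate (length z) a) = concat (replicate (length a) z)" using pow_comm[OF ha] .
  also have "\<dots> = concat (replicate (length z) b)" using pow_comm[OF hb] l by simp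
  finally have e: "concat (replicate (length z) a) = concat (replicate (length z) b)" .
  obtain n where n: "length z = Suc n" using z by (cases "length z") auto
  from e n have "a @ concat (replicate n a) = b @ concat (replicate n b)" by simp
  then show "a = b" using l by (simp add: append_eq_append_conv)
qed

lemma app_eq_len: "a@b = c@d \<Longrightarrow> length a = length c \<Longrightarrow> a = c \<and> b = d"
  by (simp add: append_eq_append_conv)

lemma app_eq_len2: "a@b = c@d \<Longrightarrow> length b = length d \<Longrightarrow> a = c \<and> b = d"
  by (metis append_eq_append_conv length_append add_right_cancel)

lemma edges_case_a:
  assumes ne: "x1@x2 \<noteq> y1@y2" and l1: "length x1 = length y1" and l2: "length x2 = length y2"
    and n1: "x1 \<noteq> []" and n2: "x2 \<noteq> []"
    and H1: "x2@y1 = x1@x2" and H2: "y2@x1 = y1@y2"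
    and L: "x2@x1 \<in> {x1@x2, y1@y2} \<or> y2@y1 \<in> {x1@x2, y1@y2}"
  shows False
proof -
  have c1: "x1 = y1 \<Longrightarrow> False"
  proof -
    assume e: "x1 = y1"
    have "x2@x1 = x1@x2" using H1 e by simp
    moreover have "y2@x1 = x1@y2" using H2 e by simp
    ultimately have "x2 = y2" using comm_cancel[OF n1] l2 by blast
    then show False using ne e by simp
  qed
  have c2: "x2 = y2 \<Longrightarrow> x2@x1 = y1@x2 \<Longrightarrow> False"
  proof -
    assume e: "x2 = y2" and E1: "x2@x1 = y1@x2"
    have "x1@(x2@x2) = (x2@x2)@x1"
    proof -
      have "x1@(x2@x2) = (x1@x2)@x2" by simp
      also have "\<dots> = x2@(y1@x2)" using H1 by simp
      also have "\<dots> = (x2@x2)@x1" using E1 by simp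
      finally show ?thesis .
    qed
    moreover have "y1@(x2@x2) = (x2@x2)@y1"
    proof -
      have "y1@(x2@x2) = (y1@x2)@x2" by simp
      also have "\<dots> = x2@(x1@x2)" using E1 by simp
      also have "\<dots> = (x2@x2)@y1" using H1 by simp
      finally show ?thesis .
    qed
    moreover have "x2@x2 \<noteq> []" using n2 by simp
    ultimately have "x1 = y1" using comm_cancel l1 by blast
    then show False using ne e by simp
  qed
  from L show False
  proof (elim disjE)
    assume "x2@x1 \<in> {x1@x2, y1@y2}"
    then have "x2@x1 = x1@x2 \<or> x2@x1 = y1@y2" by simp
    then show False
    proof (elim disjE)
      assume "x2@x1 = x1@x2"
      then have "x2@x1 = x2@y1" using H1 by simp
      then show False using c1 by simp
    next
      assume h: "x2@x1 = y1@y2"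
      then have "x2@x1 = y2@x1" using H2 by simp
      then have e: "x2 = y2" by simp
      show False using c2[OF e] h e by simp
    qed
  next
    assume "y2@y1 \<in> {x1@x2, y1@y2}"
    then have "y2@y1 = x1@x2 \<or> y2@y1 = y1@y2" by simp
    then show False
    proof (elim disjE)
      assume h: "y2@y1 = x1@x2"
      then have "y2@y1 = x2@y1" using H1 by simp
      then have e: "x2 = y2" by simp
      have "x2@x1 = y1@x2" using H2 e by simp
      then show False using c2[OF e] by simp
    next
      assume "y2@y1 = y1@y2"
      then have "y2@y1 = y2@x1" using H2 by simp
      then show False using c1 by simp
    qed
  qed
qed

lemma edges_case_d:
  assumes ne: "x1@x2 \<noteq> y1@y2" and l1: "length x1 = length y1" and l2: "length x2 = length y2"
    and n1: "x1 \<noteq> []" and n2: "x2 \<noteq> []"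
    and H1: "x2@y1 = y1@y2" and H2: "y2@x1 = x1@x2"
    and L: "x2@x1 \<in> {x1@x2, y1@y2} \<or> y2@y1 \<in> {x1@x2, y1@y2}"
  shows False
proof -
  have c1: "x2 = y2 \<Longrightarrow> False"
  proof -
    assume e: "x2 = y2"
    have "x1@x2 = x2@x1" using H2 e by simp
    moreover have "y1@x2 = x2@y1" using H1 e by simp
    ultimately have "x1 = y1" using comm_cancel[OF n2] l1 by metis
    then show False using ne e by simp
  qed
  have c2: "x1 = y1 \<Longrightarrow> x2@x1 = x1@y2 \<Longrightarrow> False"
  proof -
    assume e: "x1 = y1" and F1: "x2@x1 = x1@y2"
    have "x2@(x1@x1) = (x1@x1)@x2"
    proof -
      have "x2@(x1@x1) = (x2@x1)@x1" by simp
      also have "\<dots> = x1@(y2@x1)" using F1 by simp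
      also have "\<dots> = (x1@x1)@x2" using H2 by simp
      finally show ?thesis .
    qed
    moreover have "y2@(x1@x1) = (x1@x1)@y2"
    proof -
      have "y2@(x1@x1) = (y2@x1)@x1" by simp
      also have "\<dots> = x1@(x2@x1)" using H2 by simp
      also have "\<dots> = (x1@x1)@y2" using F1 by simp
      finally show ?thesis .
    qed
    moreover have "x1@x1 \<noteq> []" using n1 by simp
    ultimately have "x2 = y2" using comm_cancel l2 by blast
    then show False using ne e by simp
  qed
  from L show False
  proof (elim disjE)
    assume "x2@x1 \<in> {x1@x2, y1@y2}"
    then have "x2@x1 = x1@x2 \<or> x2@x1 = y1@y2" by simp
    then show False
    proof (elim disjE)
      assume "x2@x1 = x1@x2"
      then have "x2@x1 = y2@x1" using H2 by simp
      then show False using c1 by simp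
    next
      assume h: "x2@x1 = y1@y2"
      then have "x2@x1 = x2@y1" using H1 by simp
      then have e: "x1 = y1" by simp
      show False using c2[OF e] h e by simp
    qed
  next
    assume "y2@y1 \<in> {x1@x2, y1@y2}"
    then have "y2@y1 = x1@x2 \<or> y2@y1 = y1@y2" by simp
    then show False
    proof (elim disjE)
      assume h: "y2@y1 = x1@x2"
      then have "y2@y1 = y2@x1" using H2 by simp
      then have e: "x1 = y1" by simp
      have "x2@x1 = x1@y2" using H1 e by simp
      then show False using c2[OF e] by simp
    next
      assume "y2@y1 = y1@y2"
      then have "y2@y1 = x2@y1" using H1 by simp
      then show False using c1 by simp
    qed
  qed
qed

lemma edges_words:
  assumes ne: "x1@x2 \<noteq> y1@y2" and l1: "length x1 = length y1" and l2: "length x2 = length y2"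
    and n1: "x1 \<noteq> []" and n2: "x2 \<noteq> []"
    and AB: "x2@y1 \<in> {x1@x2, y1@y2}" and BA: "y2@x1 \<in> {x1@x2, y1@y2}"
    and L: "x2@x1 \<in> {x1@x2, y1@y2} \<or> y2@y1 \<in> {x1@x2, y1@y2}"
  shows False
proof -
  have "x2@y1 \<noteq> y2@x1"
  proof
    assume "x2@y1 = y2@x1"
    then have "x2 = y2 \<and> y1 = x1" using l2 by (rule app_eq_len)
    then show False using ne by simp
  qed
  then have "(x2@y1 = x1@x2 \<and> y2@x1 = y1@y2) \<or> (x2@y1 = y1@y2 \<and> y2@x1 = x1@x2)"
    using AB BA by auto
  then show False
  proof
    assume "x2@y1 = x1@x2 \<and> y2@x1 = y1@y2"
    then show False using edges_case_a[OF ne l1 l2 n1 n2 _ _ L] by blast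
  next
    assume "x2@y1 = y1@y2 \<and> y2@x1 = x1@x2"
    then show False using edges_case_d[OF ne l1 l2 n1 n2 _ _ L] by blast
  qed
qed


lemma persist: "(\<forall>j. Suc j < length (w::ab list) \<longrightarrow> w!j = p \<longrightarrow> w!Suc j = p) \<Longrightarrow> j + i < length w \<Longrightarrow> w!j = p \<Longrightarrow> w!(j+i) = p"
  by (induction i) auto
lemma persist_old: "(\<forall>j. Suc j < length w \<longrightarrow> w!j = p \<longrightarrow> w!Suc j = p) \<Longrightarrow> j + i < length w \<Longrightarrow> w!j = p \<Longrightarrow> w!(j+i) = p"
  by (induction i) auto

lemma mono_walk: "(\<forall>j. Suc j < length (w::ab list) \<longrightarrow> w!j = p \<longrightarrow> w!Suc j = p) \<Longrightarrow>
   \<exists>s n. length w \<le> 2*n+1 \<and> s+n \<le> length w \<and> (\<exists>c. \<forall>i<n. w!(s+i) = c)"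
proof -
  assume h: "\<forall>j. Suc j < length w \<longrightarrow> w!j = p \<longrightarrow> w!Suc j = p"
  show ?thesis
  proof (cases "length w = 0")
    case True then show ?thesis by (intro exI[of _ 0]) auto
  next
    case False
    define h2 where "h2 = length w div 2"
    have hl: "h2 < length w" using False unfolding h2_def by simp
    show ?thesis
    proof (cases "w!h2 = p")
      case True
      have "\<forall>i<length w - h2. w!(h2+i) = p" using persist[OF h _ True] by simp
      then show ?thesis using hl unfolding h2_def
        by (intro exI[of _ h2] exI[of _ "length w - h2"]) (auto simp: h2_def)
    next
      case False
      have "\<forall>i<Suc h2. w!(0+i) = flip p"
      proof (intro allI impI)
        fix i assume i: "i < Suc h2"
        have "w!i \<noteq> p"
        proof
          assume "w!i = p"
          then have "w!(i + (h2 - i)) = p" using persist[OF h, of i "h2-i"] hl i by simp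
          then show False using False i by simp
        qed
        then show "w!(0+i) = flip p" using neq_flip by (metis add_0)
      qed
      then show ?thesis using hl unfolding h2_def
        by (intro exI[of _ 0] exI[of _ "Suc h2"]) (auto simp: h2_def)
    qed
  qed
qed

lemma walk: "(\<forall>j. Suc j < length w \<longrightarrow> E (w!j) (w!Suc j)) \<Longrightarrow> \<not>(E A B \<and> E B A \<and> (E A A \<or> E B B)) \<Longrightarrow>
   \<exists>s n. length w \<le> 2*n+1 \<and> s+n \<le> length w \<and>
     ((\<exists>c. \<forall>i<n. w!(s+i) = c) \<or> (\<forall>i. Suc i < n \<longrightarrow> w!(s+i) \<noteq> w!(s+Suc i)))"
proof -
  assume e: "\<forall>j. Suc j < length w \<longrightarrow> E (w!j) (w!Suc j)" and ne: "\<not>(E A B \<and> E B A \<and> (E A A \<or> E B B))"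
  consider "\<not> E A B" | "\<not> E B A" | "\<not> E A A \<and> \<not> E B B" using ne by blast
  then show ?thesis
  proof cases
    case 1
    have "\<forall>j. Suc j < length w \<longrightarrow> w!j = A \<longrightarrow> w!Suc j = A"
    proof (intro allI impI)
      fix j assume "Suc j < length w" "w!j = A"
      then have "E A (w!Suc j)" using e by metis
      then show "w!Suc j = A" using 1 by (cases "w!Suc j") auto
    qed
    then show ?thesis using mono_walk by blast
  next
    case 2
    have "\<forall>j. Suc j < length w \<longrightarrow> w!j = B \<longrightarrow> w!Suc j = B"
    proof (intro allI impI)
      fix j assume "Suc j < length w" "w!j = B"
      then have "E B (w!Suc j)" using e by metis
      then show "w!Suc j = B" using 2 by (cases "w!Suc j") auto
    qed
    then show ?thesis using mono_walk by blast
  next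
    case 3
    have "\<forall>i. Suc i < length w \<longrightarrow> w!(0+i) \<noteq> w!(0+Suc i)"
    proof (intro allI impI)
      fix i assume "Suc i < length w"
      then have "E (w!i) (w!Suc i)" using e by blast
      then show "w!(0+i) \<noteq> w!(0+Suc i)" using 3 by (cases "w!i"; cases "w!Suc i") auto
    qed
    then show ?thesis by (intro exI[of _ 0] exI[of _ "length w"]) auto
  qed
qed

definition RB :: "nat \<Rightarrow> nat" where "RB k = k*(k*(3*k+2)+2)"

lemma const_bound: "uniform k \<phi> \<Longrightarrow> 2 \<le> k \<Longrightarrow> \<not> exc k \<phi> \<Longrightarrow> u \<in> factors \<phi> [A] \<Longrightarrow>
   RB k \<le> length u \<Longrightarrow> \<forall>i<length u. u!i = c \<Longrightarrow> False"
proof -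
  assume a: "uniform k \<phi>" "2 \<le> k" "\<not> exc k \<phi>" "u \<in> factors \<phi> [A]" "RB k \<le> length u" "\<forall>i<length u. u!i = c"
  have "1*(k*(3*k+2)) \<le> k*(k*(3*k+2))" using a(2) by (intro mult_le_mono1) simp
  then have "k*(3*k+2) \<le> k*(k*(3*k+2)+2)" by (simp add: algebra_simps)
  then show False using run_bound[OF a(1-4) _ a(6)] a(5) unfolding RB_def by linarith
qed

lemma edge_block: "P \<le> a \<Longrightarrow> d \<le> k \<Longrightarrow>
  drop d (take k (drop a u)) @ take d (take k (drop (a+k) u)) = take k (drop (a+d) u)"
proof -
  assume "P \<le> a" "d \<le> k"
  have "take k (drop (a+d) u) = take (k-d) (drop (a+d) u) @ take d (drop (k-d) (drop (a+d) u))"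
    using take_add[of "k-d" d "drop (a+d) u"] \<open>d \<le> k\<close> by simp
  also have "drop (k-d) (drop (a+d) u) = drop (a+k) u" using \<open>d \<le> k\<close> by (simp add: add.commute)
  finally show ?thesis using \<open>d \<le> k\<close> by (simp add: drop_take min_def add.commute)
qed

lemma main_sync:
  assumes un: "uniform k \<phi>" and k: "2 \<le> k" and ne: "\<not> exc k \<phi>"
    and i1: "is_interp \<phi> [A] u (p,v,s)" and i2: "is_interp \<phi> [A] u (p',v',s')"
    and lp: "length p < length p'" and lp': "length p' < k" and lu: "k*(2*RB k+4) \<le> length u"
  shows False
proof -
  define R where "R = RB k"
  define P where "P = length p"
  define P' where "P' = length p'"
  define d where "d = P' - P"
  have k0: "0 < k" using k by simp
  have v: "v \<in> factors \<phi> [A]" "morph \<phi> v = p@u@s" using i1 unfolding is_interp_def by auto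
  have v': "v' \<in> factors \<phi> [A]" "morph \<phi> v' = p'@u@s'" using i2 unfolding is_interp_def by auto
  have inj: "\<phi> A \<noteq> \<phi> B" using ne unfolding exc_def by blast
  define E where "E = (\<lambda>c c'. drop d (\<phi> c) @ take d (\<phi> c') \<in> {\<phi> A, \<phi> B})"
  have d0: "0 < d" "d < k" using lp lp' unfolding d_def P_def P'_def by auto
  have notE: "\<not>(E A B \<and> E B A \<and> (E A A \<or> E B B))"
  proof
    assume h: "E A B \<and> E B A \<and> (E A A \<or> E B B)"
    define x1 where "x1 = take d (\<phi> A)"
    define x2 where "x2 = drop d (\<phi> A)"
    define y1 where "y1 = take d (\<phi> B)"
    define y2 where "y2 = drop d (\<phi> B)"
    have xA: "\<phi> A = x1@x2" "\<phi> B = y1@y2" unfolding x1_def x2_def y1_def y2_def by simp_all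
    have lA: "length (\<phi> A) = k" "length (\<phi> B) = k" using unif_len[OF un] by auto
    show False
    proof (rule edges_words[of x1 x2 y1 y2])
      show "x1@x2 \<noteq> y1@y2" using inj xA by simp
      show "length x1 = length y1" unfolding x1_def y1_def using lA by simp
      show "length x2 = length y2" unfolding x2_def y2_def using lA by simp
      show "x1 \<noteq> []" unfolding x1_def using lA d0 by (auto simp: take_eq_Nil)
      show "x2 \<noteq> []" unfolding x2_def using lA d0 by simp
      show "x2@y1 \<in> {x1@x2, y1@y2}" using h xA unfolding E_def x2_def y1_def by simp
      show "y2@x1 \<in> {x1@x2, y1@y2}" using h xA unfolding E_def y2_def x1_def by simp
      show "x2@x1 \<in> {x1@x2, y1@y2} \<or> y2@y1 \<in> {x1@x2, y1@y2}" using h xA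
        unfolding E_def y2_def x1_def x2_def y1_def by simp
    qed
  qed
  define N where "N = 2*R"
  have lu2: "k*(N+4) \<le> length u" using lu unfolding N_def R_def by simp
  have blk: "\<And>i. 1 \<le> i \<Longrightarrow> i \<le> N+2 \<Longrightarrow> i < length v \<and> \<phi> (v!i) = take k (drop (k*i - P) u)"
  proof -
    fix i assume i: "1 \<le> i" "i \<le> N+2"
    have "P \<le> k*i" using lp lp' i unfolding P_def by (metis le_trans less_imp_le_nat mult_le_mono2 nat_mult_1_right)
    moreover have "k*Suc i \<le> P + length u"
    proof -
      have "k*Suc i \<le> k*(N+4)" by (rule mult_le_mono2) (use i in simp)
      then show ?thesis using lu2 by linarith
    qed
    ultimately show "i < length v \<and> \<phi> (v!i) = take k (drop (k*i - P) u)"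
      using block_in[OF un k0 v(2)] unfolding P_def by blast
  qed
  have blk': "\<And>i. 1 \<le> i \<Longrightarrow> i \<le> N+3 \<Longrightarrow> i < length v' \<and> \<phi> (v'!i) = take k (drop (k*i - P') u)"
  proof -
    fix i assume i: "1 \<le> i" "i \<le> N+3"
    have "P' \<le> k*i" using lp' i unfolding P'_def by (metis le_trans less_imp_le_nat mult_le_mono2 nat_mult_1_right)
    moreover have "k*Suc i \<le> P' + length u"
    proof -
      have "k*Suc i \<le> k*(N+4)" by (rule mult_le_mono2) (use i in simp)
      then show ?thesis using lu2 by linarith
    qed
    ultimately show "i < length v' \<and> \<phi> (v'!i) = take k (drop (k*i - P') u)"
      using block_in[OF un k0 v'(2)] unfolding P'_def by blast
  qed
  define w where "w = take (N+1) (drop 1 v')"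
  have lv': "N+3 < length v'" using blk'[of "N+3"] by simp
  have lw: "length w = N+1" unfolding w_def using lv' by simp
  have wF: "w \<in> factors \<phi> [A]" unfolding w_def by (rule factor_slice[OF v'(1)])
  have wn: "\<And>j. j < N+1 \<Longrightarrow> w!j = v'!Suc j" unfolding w_def using lv' by simp
  have edges: "\<forall>j. Suc j < length w \<longrightarrow> E (w!j) (w!Suc j)"
  proof (intro allI impI)
    fix j assume j: "Suc j < length w"
    define i where "i = Suc j"
    have i: "1 \<le> i" "i \<le> N" using j lw unfolding i_def by auto
    define a where "a = k*i - P'"
    have PP: "P' \<le> k*i" using lp' i unfolding P'_def by (metis le_trans less_imp_le_nat mult_le_mono2 nat_mult_1_right)
    have a1: "k*i - P = a + d" unfolding a_def d_def using PP lp unfolding P_def P'_def by simp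
    have a2: "k * Suc i - P' = a + k" unfolding a_def using PP by simp
    have "\<phi> (v!i) = take k (drop (a+d) u)" using blk[of i] i a1 by simp
    moreover have "\<phi> (v'!i) = take k (drop a u)" using blk'[of i] i unfolding a_def by simp
    moreover have "\<phi> (v'!Suc i) = take k (drop (a+k) u)" using blk'[of "Suc i"] i a2 by simp
    ultimately have "drop d (\<phi> (v'!i)) @ take d (\<phi> (v'!Suc i)) = \<phi> (v!i)"
      using edge_block[of 0 a d k u] d0 by simp
    moreover have "\<phi> (v!i) \<in> {\<phi> A, \<phi> B}" by (cases "v!i") auto
    ultimately have "E (v'!i) (v'!Suc i)" unfolding E_def by simp
    moreover have "w!j = v'!i" "w!Suc j = v'!Suc i" using wn j lw unfolding i_def by auto
    ultimately show "E (w!j) (w!Suc j)" by simp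
  qed
  obtain s0 n where sn: "length w \<le> 2*n+1" "s0+n \<le> length w"
     "(\<exists>c. \<forall>i<n. w!(s0+i) = c) \<or> (\<forall>i. Suc i < n \<longrightarrow> w!(s0+i) \<noteq> w!(s0+Suc i))"
    using walk[OF edges notE] by blast
  define z where "z = take n (drop s0 w)"
  have zF: "z \<in> factors \<phi> [A]" unfolding z_def by (rule factor_slice[OF wF])
  have lz: "length z = n" unfolding z_def using sn(2) by simp
  have zn: "\<And>i. i < n \<Longrightarrow> z!i = w!(s0+i)" unfolding z_def using sn(2) by simp
  have nR: "R \<le> n" using sn(1) lw unfolding N_def by simp
  from sn(3) show False
  proof
    assume "\<exists>c. \<forall>i<n. w!(s0+i) = c"
    then obtain c where "\<forall>i<n. w!(s0+i) = c" by blast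
    then have cz: "\<forall>i<length z. z!i = c" using zn lz by simp
    have "RB k \<le> length z" using lz nR unfolding R_def by simp
    from const_bound[OF un k ne zF this cz] show False .
  next
    assume "\<forall>i. Suc i < n \<longrightarrow> w!(s0+i) \<noteq> w!(s0+Suc i)"
    then have "altw z" unfolding altw_def using zn lz by simp
    then show False using alt_bound[OF un k ne zF] lz nR unfolding R_def RB_def by simp
  qed
qed


lemma interp_mod:
  assumes un: "uniform k \<phi>" and k: "2 \<le> k" and ne: "\<not> exc k \<phi>"
    and i1: "is_interp \<phi> [A] u (p,v,s)" and i2: "is_interp \<phi> [A] u (p',v',s')"
    and lu: "k*(2*RB k+4) \<le> length u"
  shows "length p mod k = length p' mod k"
proof -
  have k0: "0 < k" using k by simp
  have a1: "v \<in> factors \<phi> [A]" "morph \<phi> v = p@u@s" using i1 unfolding is_interp_def by auto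
  have a2: "v' \<in> factors \<phi> [A]" "morph \<phi> v' = p'@u@s'" using i2 unfolding is_interp_def by auto
  from trim[OF un k0 a1] obtain p1 v1 where t1: "v1 \<in> factors \<phi> [A]" "morph \<phi> v1 = p1@u@s" "length p1 < k" "length p1 mod k = length p mod k"
    by blast
  from trim[OF un k0 a2] obtain p2 v2 where t2: "v2 \<in> factors \<phi> [A]" "morph \<phi> v2 = p2@u@s'" "length p2 < k" "length p2 mod k = length p' mod k"
    by blast
  have j1: "is_interp \<phi> [A] u (p1,v1,s)" using t1 unfolding is_interp_def by simp
  have j2: "is_interp \<phi> [A] u (p2,v2,s')" using t2 unfolding is_interp_def by simp
  consider "length p1 < length p2" | "length p2 < length p1" | "length p1 = length p2" by linarith
  then show ?thesis
  proof cases
    case 1 then show ?thesis using main_sync[OF un k ne j1 j2 1 t2(3) lu] by simp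
  next
    case 2 then show ?thesis using main_sync[OF un k ne j2 j1 2 t1(3) lu] by simp
  next
    case 3 then show ?thesis using t1(4) t2(4) by simp
  qed
qed

lemma sync_one: "uniform k \<phi> \<Longrightarrow> morph \<phi> v = p@u@s \<Longrightarrow> j \<le> length u \<Longrightarrow> k dvd length p + j \<Longrightarrow>
   \<exists>i. morph \<phi> (take i v) = p @ take j u"
proof -
  assume un: "uniform k \<phi>" and e: "morph \<phi> v = p@u@s" and j: "j \<le> length u" and dv: "k dvd length p + j"
  obtain i where i: "length p + j = k*i" using dv by (auto elim: dvdE)
  have "morph \<phi> (take i v) = take (k*i) (p@u@s)" using take_morph[OF un] e by simp
  also have "\<dots> = p @ take j u"
  proof -
    have "k*i - length p = j" using i by simp
    then show ?thesis using i j by simp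
  qed
  finally show ?thesis by blast
qed

lemma mod_fill: "0 < (k::nat) \<Longrightarrow> k dvd a + (k - a mod k) mod k"
proof -
  assume k: "0 < k"
  have "(a + (k - a mod k) mod k) mod k = (a + (k - a mod k)) mod k" by (simp add: mod_add_right_eq)
  also have "\<dots> = (a mod k + (k - a mod k)) mod k" by (simp add: mod_add_left_eq)
  also have "a mod k + (k - a mod k) = k" using k by (simp add: less_imp_le_nat)
  finally show ?thesis by (simp add: dvd_eq_mod_eq_0)
qed

lemma sync_point:
  assumes un: "uniform k \<phi>" and k: "2 \<le> k" and ne: "\<not> exc k \<phi>"
    and lu: "k*(2*RB k+4) < length u"
  shows "has_sync_point \<phi> [A] u"
proof (cases "\<exists>t. is_interp \<phi> [A] u t")
  case False
  then show ?thesis unfolding has_sync_point_def by auto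
next
  case True
  then obtain t0 where t0: "is_interp \<phi> [A] u t0" by blast
  obtain p0 v0 s0 where "t0 = (p0,v0,s0)" by (cases t0)
  then have i0: "is_interp \<phi> [A] u (p0,v0,s0)" using t0 by simp
  define j where "j = (k - length p0 mod k) mod k"
  have jk: "j < k" unfolding j_def using k by simp
  have "k \<le> k*(2*RB k+4)" using k by simp
  then have ju: "j \<le> length u" using jk lu by linarith
  have main: "\<And>p v s. is_interp \<phi> [A] u (p,v,s) \<Longrightarrow> \<exists>i. morph \<phi> (take i v) = p @ take j u"
  proof -
    fix p v s assume ii: "is_interp \<phi> [A] u (p,v,s)"
    have m: "length p mod k = length p0 mod k" using interp_mod[OF un k ne ii i0] lu by simp
    have "k dvd length p + (k - length p mod k) mod k" using mod_fill k by simp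
    then have "k dvd length p + j" unfolding j_def using m by simp
    then show "\<exists>i. morph \<phi> (take i v) = p @ take j u"
      using sync_one[OF un _ ju] ii unfolding is_interp_def by simp
  qed
  show ?thesis unfolding has_sync_point_def
  proof (intro exI[of _ j] conjI allI impI)
    show "j \<le> length u" by (rule ju)
    fix t t' assume h: "is_interp \<phi> [A] u t" "is_interp \<phi> [A] u t'"
    obtain p v s where t: "t = (p,v,s)" by (cases t)
    obtain p' v' s' where t': "t' = (p',v',s')" by (cases t')
    obtain i where "morph \<phi> (take i v) = p @ take j u" using main h(1) t by blast
    moreover obtain i' where "morph \<phi> (take i' v') = p' @ take j u" using main h(2) t' by blast
    ultimately show "synchronized_at \<phi> u j t t'" unfolding synchronized_at_def t t' by auto
  qed
qed

lemma morph_inj: "uniform k \<phi> \<Longrightarrow> 0 < k \<Longrightarrow> \<phi> A \<noteq> \<phi> B \<Longrightarrow> morph \<phi> u = morph \<phi> v \<Longrightarrow> u = v"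
proof (induction u arbitrary: v)
  case Nil
  then have "k * length v = 0" using length_morph[OF Nil.prems(1), of v] by simp
  then show ?case using Nil.prems(2) by simp
next
  case (Cons a u)
  have "k * length (a#u) = k * length v" using Cons.prems(4) length_morph[OF Cons.prems(1)] by metis
  then have "length (a#u) = length v" using Cons.prems(2) by (metis mult_cancel1 neq0_conv)
  then have "length v = Suc (length u)" by simp
  then obtain b v' where v: "v = b # v'" by (cases v) auto
  have "\<phi> a @ morph \<phi> u = \<phi> b @ morph \<phi> v'" using Cons.prems(4) v by simp
  moreover have "length (\<phi> a) = length (\<phi> b)" using unif_len[OF Cons.prems(1)] by simp
  ultimately have "\<phi> a = \<phi> b" "morph \<phi> u = morph \<phi> v'" by auto
  then show ?case using letter_inj[OF Cons.prems(3)] Cons.IH[OF Cons.prems(1-3)] v by blast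
qed

lemma circ: "uniform k \<phi> \<Longrightarrow> 2 \<le> k \<Longrightarrow> \<not> exc k \<phi> \<Longrightarrow> circular \<phi> [A]"
proof -
  assume un: "uniform k \<phi>" and k: "2 \<le> k" and ne: "\<not> exc k \<phi>"
  have inj: "\<phi> A \<noteq> \<phi> B" using ne unfolding exc_def by blast
  have "\<forall>x. \<phi> x \<noteq> []"
  proof
    fix x have "length (\<phi> x) = k" using unif_len[OF un] .
    then show "\<phi> x \<noteq> []" using k by auto
  qed
  moreover have "\<forall>u \<in> factors \<phi> [A]. \<forall>v \<in> factors \<phi> [A]. morph \<phi> u = morph \<phi> v \<longrightarrow> u = v"
    using morph_inj[OF un _ inj] k by simp
  moreover have "\<forall>u \<in> factors \<phi> [A]. length u > k*(2*RB k+4) \<longrightarrow> has_sync_point \<phi> [A] u"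
    using sync_point[OF un k ne] by blast
  ultimately show ?thesis unfolding circular_def by blast
qed


lemma interp_factor: "is_interp \<phi> w u (p,v,s) \<Longrightarrow> u \<in> factors \<phi> w"
  unfolding is_interp_def using factor_morph factor_sub by fastforce

lemma no_sync:
  assumes un: "uniform k \<phi>" and k: "2 \<le> k"
    and i1: "is_interp \<phi> w u (p,v,s)" and i2: "is_interp \<phi> w u (p',v',s')"
    and m1: "length p mod k = 0" and m2: "length p' mod k = 1"
  shows "\<not> has_sync_point \<phi> w u"
proof
  assume "has_sync_point \<phi> w u"
  then obtain j where j: "j \<le> length u" and h: "\<forall>t t'. is_interp \<phi> w u t \<longrightarrow> is_interp \<phi> w u t'
       \<longrightarrow> synchronized_at \<phi> u j t t'" unfolding has_sync_point_def by blast
  have "synchronized_at \<phi> u j (p,v,s) (p,v,s)" using h i1 by blast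
  then obtain i where "morph \<phi> (take i v) = p @ take j u" unfolding synchronized_at_def by auto
  then have "k * length (take i v) = length p + j" using length_morph[OF un, of "take i v"] j by simp
  then have e1: "(length p + j) mod k = 0" by (metis mod_mult_self1_is_0)
  have "synchronized_at \<phi> u j (p',v',s') (p',v',s')" using h i2 by blast
  then obtain i' where "morph \<phi> (take i' v') = p' @ take j u" unfolding synchronized_at_def by auto
  then have "k * length (take i' v') = length p' + j" using length_morph[OF un, of "take i' v'"] j by simp
  then have e2: "(length p' + j) mod k = 0" by (metis mod_mult_self1_is_0)
  have "j mod k = 0" using e1 m1 mod_add_left_eq[of "length p" k j] by simp
  moreover have "(1 + j) mod k = 0" using e2 m2 mod_add_left_eq[of "length p'" k j] by simp
  ultimately have "1 mod k = 0" using mod_add_right_eq[of 1 j k] by simp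
  then show False using k by simp
qed

lemma not_circ:
  assumes un: "uniform k \<phi>" and k: "2 \<le> k"
    and h: "\<And>Z. \<exists>u p v s p' v' s'. Z < length u \<and> is_interp \<phi> [A] u (p,v,s) \<and> is_interp \<phi> [A] u (p',v',s')
              \<and> length p mod k = 0 \<and> length p' mod k = 1"
  shows "\<not> circular \<phi> [A]"
proof
  assume "circular \<phi> [A]"
  then obtain Z where Z: "\<forall>u \<in> factors \<phi> [A]. length u > Z \<longrightarrow> has_sync_point \<phi> [A] u"
    unfolding circular_def by blast
  obtain u p v s p' v' s' where a: "Z < length u" "is_interp \<phi> [A] u (p,v,s)" "is_interp \<phi> [A] u (p',v',s')"
     "length p mod k = 0" "length p' mod k = 1" using h[of Z] by metis
  have "u \<in> factors \<phi> [A]" using interp_factor[OF a(2)] .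
  then have "has_sync_point \<phi> [A] u" using Z a(1) by blast
  then show False using no_sync[OF un k a(2,3,4,5)] by simp
qed

lemma morph_rep: "\<phi> e = replicate k c \<Longrightarrow> morph \<phi> (replicate n e) = replicate (k*n) c"
  by (induction n) (auto simp: replicate_add)

lemma not_circ_run:
  assumes un: "uniform k \<phi>" and k: "2 \<le> k" and e: "\<phi> c' = replicate k c"
    and all: "\<forall>n. replicate n c' \<in> factors \<phi> [A]"
  shows "\<not> circular \<phi> [A]"
proof (rule not_circ[OF un k])
  fix Z
  define u where "u = replicate (Z+1) c"
  define v where "v = replicate (Z+2) c'"
  have mv: "morph \<phi> v = replicate (k*(Z+2)) c" unfolding v_def using morph_rep[of \<phi> c' k c "Z+2", OF e] by simp
  have "1*(Z+2) \<le> k*(Z+2)" by (rule mult_le_mono1) (use k in simp)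
  then have le: "Z+2 \<le> k*(Z+2)" by simp
  have vF: "v \<in> factors \<phi> [A]" unfolding v_def by (rule all[rule_format])
  have i1: "is_interp \<phi> [A] u ([], v, replicate (k*(Z+2) - (Z+1)) c)"
  proof -
    have "replicate (Z+1) c @ replicate (k*(Z+2) - (Z+1)) c = replicate ((Z+1) + (k*(Z+2) - (Z+1))) c"
      by (simp only: replicate_add)
    also have "(Z+1) + (k*(Z+2) - (Z+1)) = k*(Z+2)" using le by simp
    finally show ?thesis unfolding is_interp_def u_def using vF mv by simp
  qed
  have i2: "is_interp \<phi> [A] u ([c], v, replicate (k*(Z+2) - (Z+2)) c)"
  proof -
    have "[c] @ replicate (Z+1) c @ replicate (k*(Z+2) - (Z+2)) c = replicate (1 + (Z+1) + (k*(Z+2) - (Z+2))) c"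
      by (simp add: replicate_add)
    also have "1 + (Z+1) + (k*(Z+2) - (Z+2)) = k*(Z+2)" using le by simp
    finally show ?thesis unfolding is_interp_def u_def using vF mv by simp
  qed
  have zl: "Z < length u" unfolding u_def by simp
  have mm: "length ([]::ab list) mod k = 0" "length [c] mod k = 1" using k by auto
  show "\<exists>u p v s p' v' s'. Z < length u \<and> is_interp \<phi> [A] u (p,v,s) \<and> is_interp \<phi> [A] u (p',v',s')
              \<and> length p mod k = 0 \<and> length p' mod k = 1"
    apply (rule exI[of _ u], rule exI[of _ "[]"], rule exI[of _ v], rule exI[of _ "replicate (k*(Z+2) - (Z+1)) c"])
    apply (rule exI[of _ "[c]"], rule exI[of _ v], rule exI[of _ "replicate (k*(Z+2) - (Z+2)) c"])
    using i1 i2 zl mm by simp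
qed

definition al :: "ab \<Rightarrow> ab \<Rightarrow> nat \<Rightarrow> ab list" where "al a b n = concat (replicate n [a,b])"

lemma al_Suc: "al a b (Suc n) = a # b # al a b n" unfolding al_def by simp
lemma al_0[simp]: "al a b 0 = []" unfolding al_def by simp
lemma al_add: "al a b (m+n) = al a b m @ al a b n" unfolding al_def by (simp add: replicate_add)
lemma al_swap: "[a] @ al b a n = al a b n @ [a]" by (induction n) (auto simp: al_Suc)
lemma al_len[simp]: "length (al a b n) = 2*n" unfolding al_def by (induction n) auto
lemma al_take: "take (2*m) (al a b (m+r)) = al a b m" by (simp add: al_add)

lemma al_odd_img: "al a b m @ [a] @ al b a m @ [b] = al a b (2*m+1)"
proof -
  have "al a b m @ [a] @ al b a m @ [b] = al a b m @ (al a b m @ [a]) @ [b]" using al_swap[of a b m] by simp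
  also have "\<dots> = al a b m @ al a b m @ al a b 1" by (simp add: al_def)
  also have "\<dots> = al a b (m+m+1)" by (simp only: al_add append_assoc)
  finally show ?thesis by (simp add: mult_2)
qed

lemma morph_al: "morph \<phi> [a,b] = al c d k \<Longrightarrow> morph \<phi> (al a b n) = al c d (n*k)"
proof (induction n)
  case 0 then show ?case by simp
next
  case (Suc n)
  have "morph \<phi> (al a b (Suc n)) = morph \<phi> [a,b] @ morph \<phi> (al a b n)" by (simp add: al_Suc)
  also have "\<dots> = al c d k @ al c d (n*k)" using Suc by simp
  also have "\<dots> = al c d (Suc n * k)" by (simp add: al_add[symmetric] add.commute)
  finally show ?case .
qed

lemma al_sub: "al a b n \<in> factors \<phi> w \<Longrightarrow> m \<le> n \<Longrightarrow> al a b m \<in> factors \<phi> w"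
proof -
  assume h: "al a b n \<in> factors \<phi> w" "m \<le> n"
  then obtain r where "n = m + r" using le_Suc_ex by blast
  then show ?thesis using factor_take[OF h(1), of "2*m"] al_take by simp
qed

lemma not_circ_alt:
  assumes un: "uniform k \<phi>" and k: "2 \<le> k"
    and h1: "\<forall>n. \<exists>v. v \<in> factors \<phi> [A] \<and> morph \<phi> v = al A B (k*n)"
    and h2: "\<forall>n. \<exists>v. v \<in> factors \<phi> [A] \<and> morph \<phi> v = al B A (k*n)"
  shows "\<not> circular \<phi> [A]"
proof (rule not_circ[OF un k])
  fix Z
  define u where "u = al A B (Z+1)"
  have "1*(Z+2) \<le> k*(Z+2)" by (rule mult_le_mono1) (use k in simp)
  then have le: "Z+2 \<le> k*(Z+2)" by simp
  obtain v where v: "v \<in> factors \<phi> [A]" "morph \<phi> v = al A B (k*(Z+2))" using h1 by blast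
  obtain v' where v': "v' \<in> factors \<phi> [A]" "morph \<phi> v' = al B A (k*(Z+2))" using h2 by blast
  have "al A B (k*(Z+2)) = al A B ((Z+1) + (k*(Z+2) - (Z+1)))" using le by (intro arg_cong[where f="al A B"]) simp
  then have e1: "morph \<phi> v = [] @ u @ al A B (k*(Z+2) - (Z+1))" using v(2) unfolding u_def by (simp only: al_add) simp
  have "al B A (k*(Z+2)) = al B A (Suc (Z+1) + (k*(Z+2) - (Z+2)))" using le by (intro arg_cong[where f="al B A"]) simp
  also have "\<dots> = [B] @ ([A] @ al B A (Z+1)) @ al B A (k*(Z+2) - (Z+2))" by (simp only: al_add al_Suc) simp
  also have "\<dots> = [B] @ u @ [A] @ al B A (k*(Z+2) - (Z+2))" unfolding u_def using al_swap[of A B "Z+1"] by simp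
  finally have e2: "morph \<phi> v' = [B] @ u @ ([A] @ al B A (k*(Z+2) - (Z+2)))" using v'(2) by simp
  have i1: "is_interp \<phi> [A] u ([], v, al A B (k*(Z+2) - (Z+1)))" unfolding is_interp_def using v(1) e1 by simp
  have i2: "is_interp \<phi> [A] u ([B], v', [A] @ al B A (k*(Z+2) - (Z+2)))" unfolding is_interp_def using v'(1) e2 by simp
  have zl: "Z < length u" unfolding u_def by simp
  have mm: "length ([]::ab list) mod k = 0" "length [B] mod k = 1" using k by auto
  show "\<exists>u p v s p' v' s'. Z < length u \<and> is_interp \<phi> [A] u (p,v,s) \<and> is_interp \<phi> [A] u (p',v',s')
              \<and> length p mod k = 0 \<and> length p' mod k = 1"
    apply (rule exI[of _ u], rule exI[of _ "[]"], rule exI[of _ v], rule exI[of _ "al A B (k*(Z+2) - (Z+1))"])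
    apply (rule exI[of _ "[B]"], rule exI[of _ v'], rule exI[of _ "[A] @ al B A (k*(Z+2) - (Z+2))"])
    using i1 i2 zl mm by simp
qed


lemma phiA_F: "\<phi> A \<in> factors \<phi> [A]"
  using factor_morph[OF factor_w, of \<phi> "[A]"] by simp

lemma B_in: "uniform k \<phi> \<Longrightarrow> \<phi> A \<noteq> replicate k A \<Longrightarrow> [B] \<in> factors \<phi> [A]"
proof -
  assume un: "uniform k \<phi>" and ne: "\<phi> A \<noteq> replicate k A"
  have "B \<in> set (\<phi> A)"
  proof (rule ccontr)
    assume nb: "B \<notin> set (\<phi> A)"
    have yA: "\<And>y. y \<in> set (\<phi> A) \<Longrightarrow> y = A"
    proof -
      fix y assume "y \<in> set (\<phi> A)"
      then have "y \<noteq> B" using nb by blast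
      then show "y = A" by (cases y) simp_all
    qed
    have "\<phi> A = replicate k A" by (rule replicate_eqI[OF unif_len[OF un, of A] yA])
    then show False using ne by simp
  qed
  from split_list[OF this] obtain ys zs where "\<phi> A = ys @ B # zs" by blast
  then have "\<phi> A = ys @ [B] @ zs" by simp
  then show ?thesis using phiA_F[of \<phi>] factor_sub[of ys "[B]" zs] by simp
qed

lemma rep_take: "replicate n c \<in> factors \<phi> w \<Longrightarrow> m \<le> n \<Longrightarrow> replicate m c \<in> factors \<phi> w"
  using factor_take[of "replicate n c" \<phi> w m] by (simp add: min_def)

lemma rep_all: "[c] \<in> factors \<phi> w \<Longrightarrow> (\<And>n. replicate (Suc n) c \<in> factors \<phi> w \<Longrightarrow> replicate (Suc (Suc n)) c \<in> factors \<phi> w)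
   \<Longrightarrow> \<forall>n. replicate n c \<in> factors \<phi> w"
proof -
  assume b: "[c] \<in> factors \<phi> w" and st: "\<And>n. replicate (Suc n) c \<in> factors \<phi> w \<Longrightarrow> replicate (Suc (Suc n)) c \<in> factors \<phi> w"
  have s: "replicate (Suc n) c \<in> factors \<phi> w" for n
  proof (induction n)
    case 0 then show ?case using b by simp
  next
    case (Suc n) then show ?case using st by blast
  qed
  show ?thesis
  proof
    fix n show "replicate n c \<in> factors \<phi> w" using rep_take[OF s[of n], of n] by simp
  qed
qed

lemma grow: "2 \<le> k \<Longrightarrow> Suc (Suc n) \<le> k * Suc n"
proof -
  assume "2 \<le> k"
  then have "2 * Suc n \<le> k * Suc n" by (rule mult_le_mono1)
  then show ?thesis by simp
qed

lemma grow2: "2 \<le> k \<Longrightarrow> Suc (Suc n) \<le> k * (k * Suc n)"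
proof -
  assume k: "2 \<le> k"
  have "Suc (Suc n) \<le> k * Suc n" using grow[OF k] .
  also have "1 * (k * Suc n) \<le> k * (k * Suc n)" using k by (intro mult_le_mono1) simp
  finally show ?thesis by simp
qed

lemma run_self:
  assumes k: "2 \<le> k" and e: "\<phi> c = replicate k c" and b: "[c] \<in> factors \<phi> [A]"
  shows "\<forall>n. replicate n c \<in> factors \<phi> [A]"
proof (rule rep_all[OF b])
  fix n assume "replicate (Suc n) c \<in> factors \<phi> [A]"
  then have "morph \<phi> (replicate (Suc n) c) \<in> factors \<phi> [A]" by (rule factor_morph)
  then have r: "replicate (k * Suc n) c \<in> factors \<phi> [A]" using morph_rep[of \<phi> c k c "Suc n", OF e] by simp
  show "replicate (Suc (Suc n)) c \<in> factors \<phi> [A]" by (rule rep_take[OF r grow[OF k]])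
qed

lemma al_all: "al A B 1 \<in> factors \<phi> w \<Longrightarrow> (\<And>n. al A B (Suc n) \<in> factors \<phi> w \<Longrightarrow> al A B (Suc (Suc n)) \<in> factors \<phi> w)
   \<Longrightarrow> al A B n \<in> factors \<phi> w"
proof -
  assume b: "al A B 1 \<in> factors \<phi> w" and st: "\<And>n. al A B (Suc n) \<in> factors \<phi> w \<Longrightarrow> al A B (Suc (Suc n)) \<in> factors \<phi> w"
  have s: "al A B (Suc n) \<in> factors \<phi> w" for n
  proof (induction n)
    case 0 then show ?case using b by simp
  next
    case (Suc n) then show ?case using st by blast
  qed
  show ?thesis using al_sub[OF s[of n], of n] by simp
qed

lemma al_BA: "al A B (Suc n) \<in> factors \<phi> w \<Longrightarrow> al B A n \<in> factors \<phi> w"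
proof -
  assume h: "al A B (Suc n) \<in> factors \<phi> w"
  have "al A B (Suc n) = [A] @ ([B] @ al A B n)" by (simp add: al_Suc)
  also have "[B] @ al A B n = al B A n @ [B]" by (rule al_swap)
  finally show ?thesis using h factor_sub[of "[A]" "al B A n" "[B]"] by simp
qed


lemma exc_not_circ: "uniform k \<phi> \<Longrightarrow> 2 \<le> k \<Longrightarrow> exc k \<phi> \<Longrightarrow> \<not> circular \<phi> [A]"
proof -
  assume un: "uniform k \<phi>" and k: "2 \<le> k" and ex: "exc k \<phi>"
  show ?thesis
  proof (cases "\<phi> A = replicate k A")
    case True
    have "\<forall>n. replicate n A \<in> factors \<phi> [A]" using run_self[of k \<phi> A, OF k True factor_w] .
    then show ?thesis using not_circ_run[OF un k True] by blast
  next
    case nA: False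
    have BF: "[B] \<in> factors \<phi> [A]" using B_in[OF un nA] .
    show ?thesis
    proof (cases "\<phi> B = replicate k B")
      case True
      have "\<forall>n. replicate n B \<in> factors \<phi> [A]" using run_self[of k \<phi> B, OF k True BF] .
      then show ?thesis using not_circ_run[OF un k True] by blast
    next
      case nB: False
      show ?thesis
      proof (cases "\<phi> A = \<phi> B")
        case True
        have "morph \<phi> [A] = morph \<phi> [B]" using True by simp
        then show ?thesis unfolding circular_def using factor_w[of "[A]" \<phi>] BF by blast
      next
        case nAB: False
        show ?thesis
        proof (cases "\<phi> A = replicate k B \<and> \<phi> B = replicate k A")
          case True
          have allB: "\<forall>n. replicate n B \<in> factors \<phi> [A]"
          proof (rule rep_all[OF BF])
            fix n assume "replicate (Suc n) B \<in> factors \<phi> [A]"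
            then have mem: "morph \<phi> (morph \<phi> (replicate (Suc n) B)) \<in> factors \<phi> [A]" by (intro factor_morph)
            have e1: "morph \<phi> (replicate (Suc n) B) = replicate (k * Suc n) A"
              using morph_rep[of \<phi> B k A "Suc n"] True by blast
            have e2: "morph \<phi> (replicate (k * Suc n) A) = replicate (k * (k * Suc n)) B"
              using morph_rep[of \<phi> A k B "k * Suc n"] True by blast
            have "morph \<phi> (morph \<phi> (replicate (Suc n) B)) = replicate (k * (k * Suc n)) B"
              by (simp only: e1 e2)
            with mem have "replicate (k * (k * Suc n)) B \<in> factors \<phi> [A]" by simp
            then show "replicate (Suc (Suc n)) B \<in> factors \<phi> [A]" by (rule rep_take[OF _ grow2[OF k]])
          qed
          then show ?thesis using not_circ_run[OF un k _ allB] True by blast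
        next
          case n3: False
          obtain m where m: "m \<ge> 1" "k = 2*m+1" and
            cs: "(\<phi> A = al A B m @ [A] \<and> \<phi> B = al B A m @ [B]) \<or> (\<phi> A = al B A m @ [B] \<and> \<phi> B = al A B m @ [A])"
            using ex nA nB nAB n3 unfolding exc_def al_def by blast
          obtain m' where m': "m = Suc m'" using m(1) by (cases m) auto
          from cs show ?thesis
          proof
            assume c: "\<phi> A = al A B m @ [A] \<and> \<phi> B = al B A m @ [B]"
            have mAB: "morph \<phi> [A,B] = al A B k" using c m(2) al_odd_img[of A B m] by simp
            have mBA: "morph \<phi> [B,A] = al B A k" using c m(2) al_odd_img[of B A m] by simp
            have eq: "\<phi> A = [] @ al A B 1 @ (al A B m' @ [A])" using c m' by (simp add: al_Suc)
            have "[] @ al A B 1 @ (al A B m' @ [A]) \<in> factors \<phi> [A]" using phiA_F[of \<phi>] by (simp only: eq)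
            then have AB1: "al A B 1 \<in> factors \<phi> [A]" by (rule factor_sub)
            have allAB: "al A B n \<in> factors \<phi> [A]" for n
            proof (rule al_all[OF AB1])
              fix n assume "al A B (Suc n) \<in> factors \<phi> [A]"
              then have "morph \<phi> (al A B (Suc n)) \<in> factors \<phi> [A]" by (rule factor_morph)
              then have "al A B (Suc n * k) \<in> factors \<phi> [A]" using morph_al[OF mAB] by simp
              moreover have "Suc (Suc n) \<le> Suc n * k" using grow[OF k, of n] by (simp add: mult.commute)
              ultimately show "al A B (Suc (Suc n)) \<in> factors \<phi> [A]" by (rule al_sub)
            qed
            show ?thesis
            proof (rule not_circ_alt[OF un k])
              show "\<forall>n. \<exists>v. v \<in> factors \<phi> [A] \<and> morph \<phi> v = al A B (k*n)"
              proof
                fix n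
                have "morph \<phi> (al A B n) = al A B (n*k)" by (rule morph_al[OF mAB])
                then show "\<exists>v. v \<in> factors \<phi> [A] \<and> morph \<phi> v = al A B (k*n)"
                  using allAB by (intro exI[of _ "al A B n"]) (simp add: mult.commute)
              qed
              show "\<forall>n. \<exists>v. v \<in> factors \<phi> [A] \<and> morph \<phi> v = al B A (k*n)"
              proof
                fix n
                have "morph \<phi> (al B A n) = al B A (n*k)" by (rule morph_al[OF mBA])
                then show "\<exists>v. v \<in> factors \<phi> [A] \<and> morph \<phi> v = al B A (k*n)"
                  using al_BA[OF allAB] by (intro exI[of _ "al B A n"]) (simp add: mult.commute)
              qed
            qed
          next
            assume c: "\<phi> A = al B A m @ [B] \<and> \<phi> B = al A B m @ [A]"
            have mAB: "morph \<phi> [A,B] = al B A k" using c m(2) al_odd_img[of B A m] by simp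
            have mBA: "morph \<phi> [B,A] = al A B k" using c m(2) al_odd_img[of A B m] by simp
            have "\<phi> A = [B] @ ([A] @ (al B A m' @ [B]))" using c m' by (simp add: al_Suc)
            also have "al B A m' @ [B] = [B] @ al A B m'" using al_swap[of B A m'] by simp
            finally have eq: "\<phi> A = [B] @ al A B 1 @ al A B m'" by (simp add: al_Suc)
            have "[B] @ al A B 1 @ al A B m' \<in> factors \<phi> [A]" using phiA_F[of \<phi>] by (simp only: eq)
            then have AB1: "al A B 1 \<in> factors \<phi> [A]" by (rule factor_sub)
            have allAB: "al A B n \<in> factors \<phi> [A]" for n
            proof (rule al_all[OF AB1])
              fix n assume "al A B (Suc n) \<in> factors \<phi> [A]"
              then have "morph \<phi> (morph \<phi> (al A B (Suc n))) \<in> factors \<phi> [A]" by (intro factor_morph)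
              then have "al A B (Suc n * k * k) \<in> factors \<phi> [A]" using morph_al[OF mAB] morph_al[OF mBA] by simp
              moreover have "Suc (Suc n) \<le> Suc n * k * k" using grow2[OF k, of n] by (simp add: mult.commute mult.left_commute)
              ultimately show "al A B (Suc (Suc n)) \<in> factors \<phi> [A]" by (rule al_sub)
            qed
            show ?thesis
            proof (rule not_circ_alt[OF un k])
              show "\<forall>n. \<exists>v. v \<in> factors \<phi> [A] \<and> morph \<phi> v = al A B (k*n)"
              proof
                fix n
                have "morph \<phi> (al B A n) = al A B (n*k)" by (rule morph_al[OF mBA])
                then show "\<exists>v. v \<in> factors \<phi> [A] \<and> morph \<phi> v = al A B (k*n)"
                  using al_BA[OF allAB] by (intro exI[of _ "al B A n"]) (simp add: mult.commute)
              qed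
              show "\<forall>n. \<exists>v. v \<in> factors \<phi> [A] \<and> morph \<phi> v = al B A (k*n)"
              proof
                fix n
                have "morph \<phi> (al A B n) = al B A (n*k)" by (rule morph_al[OF mAB])
                then show "\<exists>v. v \<in> factors \<phi> [A] \<and> morph \<phi> v = al B A (k*n)"
                  using allAB by (intro exI[of _ "al A B n"]) (simp add: mult.commute)
              qed
            qed
          qed
        qed
      qed
    qed
  qed
qed

theorem mainTheorem4:
  fixes k :: nat and \<phi> :: "ab \<Rightarrow> ab list"
  assumes "k \<ge> 2" and "uniform k \<phi>"
  shows "\<not> circular \<phi> [A] \<longleftrightarrow>
    (\<phi> A = \<phi> B
     \<or> (\<phi> A = replicate k A \<or> \<phi> B = replicate k B)
     \<or> (\<phi> A = replicate k B \<and> \<phi> B = replicate k A)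
     \<or> (\<exists>m\<ge>1. k = 2*m+1 \<and> \<phi> A = concat (replicate m [A,B]) @ [A]
                          \<and> \<phi> B = concat (replicate m [B,A]) @ [B])
     \<or> (\<exists>m\<ge>1. k = 2*m+1 \<and> \<phi> A = concat (replicate m [B,A]) @ [B]
                          \<and> \<phi> B = concat (replicate m [A,B]) @ [A]))"
proof -
  have "\<not> circular \<phi> [A] \<longleftrightarrow> exc k \<phi>"
    using exc_not_circ[OF assms(2,1)] circ[OF assms(2,1)] by blast
  then show ?thesis unfolding exc_def .
qed


end
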